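(* For a greedy policy and the stopping times $T_n:=\min\bigl(n,\inf\{k\ge1: S_{\mathbf G}(k+1)=\lceil n/2\rceil+1\ \text{or}\ R_{\mathbf G}(k+1)=\lceil n/2\rceil+1\}\bigr)$, $$\frac{R_{\mathbf G}(n)-R_{\mathbf G}(T_n)}{n-T_n}\xrightarrow{P}\frac12\quad(n\to\infty).$$
   Context: Let $(r_i)_{i\ge1}$, $(s_i)_{i\ge1}$ be probability vectors on the positive integers with $\mu:=\sum_i r_is_i>0$. Let $\{L_{\mathbf R}(n)\}_{n\ge1}$, $\{L_{\mathbf S}(n)\}_{n\ge1}$ be independent i.i.d. sequences with $\Pr(L_{\mathbf R}(1)=i)=r_i$, $\Pr(L_{\mathbf S}(1)=i)=s_i$. Put $X_{\mathbf R}(n)=s_{L_{\mathbf R}(n)}$, $X_{\mathbf S}(n)=r_{L_{\mathbf S}(n)}$ (common mean $\mu$, variances $\sigma_{\mathbf R}^2,\sigma_{\mathbf S}^2$; standing assumption $\sigma_{\mathbf R}+\sigma_{\mathbf S}>0$), and $\Gamma_{\mathbf R}[m]=\sum_{j=1}^mX_{\mathbf R}(j)$, $\Gamma_{\mathbf S}[m]=\sum_{j=1}^mX_{\mathbf S}(j)$. A reading policy is a $\{0,1\}$-valued process $C(n)$ ($C(n)=1$ iff the $n$-th record is read from $\mathbf R$), $R(n)=\sum_{j\le n}C(j)$, $S(n)=n-R(n)$, with $C(n)$ being $\mathcal F_{n-1}$-measurable where $\mathcal F_n=\mathcal F_0\vee\sigma(L_{\mathbf R}(1),\dots,L_{\mathbf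 R}(R(n));L_{\mathbf S}(1),\dots,L_{\mathbf S}(S(n)))$ and $\mathcal F_0$ (randomization) is independent of the labels. A greedy policy satisfies, for $n\ge1$, $C(n+1)=1$ if $\Gamma_{\mathbf S}[S(n)]>\Gamma_{\mathbf R}[R(n)]$ and $C(n+1)=0$ if $\Gamma_{\mathbf S}[S(n)]<\Gamma_{\mathbf R}[R(n)]$ (ties arbitrary); $R_{\mathbf G},S_{\mathbf G}$ denote its $R,S$. On the event $\{T_n=n\}$ the ratio in the claim is assigned any fixed value. *)

theory Defs
  imports "HOL-Probability.Probability"
begin

text \<open>Number of records read from R among the first n reads (C j = True iff read j is from R).\<close>
definition Rcnt :: "(nat \<Rightarrow> 'a \<Rightarrow> bool) \<Rightarrow> nat \<Rightarrow> 'a \<Rightarrow> nat" where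
  "Rcnt C n \<omega> = card {j \<in> {1..n}. C j \<omega>}"

definition Scnt :: "(nat \<Rightarrow> 'a \<Rightarrow> bool) \<Rightarrow> nat \<Rightarrow> 'a \<Rightarrow> nat" where
  "Scnt C n \<omega> = n - Rcnt C n \<omega>"

definition Gam :: "(nat \<Rightarrow> real) \<Rightarrow> (nat \<Rightarrow> 'a \<Rightarrow> nat) \<Rightarrow> nat \<Rightarrow> 'a \<Rightarrow> real" where
  "Gam w L m \<omega> = (\<Sum>j=1..m. w (L j \<omega>))"

definition rv_sets :: "'a measure \<Rightarrow> ('a \<Rightarrow> 'b) \<Rightarrow> 'a set set" where
  "rv_sets M X = {X -` A \<inter> space M | A. True}"

text \<open>Generator of F_n: F_0 together with the labels already read,
  L_R(1..R(n)) and L_S(1..S(n)); unread positions are observed as None.\<close>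
definition obs_gen :: "'a measure \<Rightarrow> 'a set set \<Rightarrow> (nat \<Rightarrow> 'a \<Rightarrow> nat) \<Rightarrow> (nat \<Rightarrow> 'a \<Rightarrow> nat)
    \<Rightarrow> (nat \<Rightarrow> 'a \<Rightarrow> bool) \<Rightarrow> nat \<Rightarrow> 'a set set" where
  "obs_gen M F0 LR LS C n =
     F0 \<union> (\<Union>j. rv_sets M (\<lambda>\<omega>. if j \<in> {1..Rcnt C n \<omega>} then Some (LR j \<omega>) else None))
        \<union> (\<Union>j. rv_sets M (\<lambda>\<omega>. if j \<in> {1..Scnt C n \<omega>} then Some (LS j \<omega>) else None))"

definition filt :: "'a measure \<Rightarrow> 'a set set \<Rightarrow> (nat \<Rightarrow> 'a \<Rightarrow> nat) \<Rightarrow> (nat \<Rightarrow> 'a \<Rightarrow> nat)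
    \<Rightarrow> (nat \<Rightarrow> 'a \<Rightarrow> bool) \<Rightarrow> nat \<Rightarrow> 'a set set" where
  "filt M F0 LR LS C n = sigma_sets (space M) (obs_gen M F0 LR LS C n)"

definition stopT :: "(nat \<Rightarrow> 'a \<Rightarrow> bool) \<Rightarrow> nat \<Rightarrow> 'a \<Rightarrow> nat" where
  "stopT C n \<omega> =
    (let h = nat \<lceil>real n / 2\<rceil> + 1;
         P = (\<lambda>k. 1 \<le> k \<and> (Scnt C (k+1) \<omega> = h \<or> Rcnt C (k+1) \<omega> = h))
     in if \<exists>k. P k then min n (LEAST k. P k) else n)"

end

theory Submission
  imports Defs "HOL-Real_Asymp.Real_Asymp"
begin


lemma Rcnt_0[simp]: "Rcnt C 0 \<omega> = 0"
  by (simp add: Rcnt_def)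

lemma Rcnt_Suc: "Rcnt C (Suc k) \<omega> = Rcnt C k \<omega> + (if C (Suc k) \<omega> then 1 else 0)"
proof -
  have "{j \<in> {1..Suc k}. C j \<omega>} = {j \<in> {1..k}. C j \<omega>} \<union> (if C (Suc k) \<omega> then {Suc k} else {})"
    by (auto simp: le_Suc_eq)
  then show ?thesis unfolding Rcnt_def by (simp add: card_insert_if)
qed

lemma Rcnt_le: "Rcnt C k \<omega> \<le> k"
  by (induction k) (auto simp: Rcnt_Suc)

lemma Rcnt_mono: "k \<le> k' \<Longrightarrow> Rcnt C k \<omega> \<le> Rcnt C k' \<omega>"
  by (induction k' rule: dec_induct) (auto simp: Rcnt_Suc)

lemma Scnt_0[simp]: "Scnt C 0 \<omega> = 0"
  by (simp add: Scnt_def)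

lemma Scnt_Suc: "Scnt C (Suc k) \<omega> = Scnt C k \<omega> + (if C (Suc k) \<omega> then 0 else 1)"
  using Rcnt_le[of C k \<omega>] by (simp add: Scnt_def Rcnt_Suc)

lemma Scnt_mono: "k \<le> k' \<Longrightarrow> Scnt C k \<omega> \<le> Scnt C k' \<omega>"
  by (induction k' rule: dec_induct) (auto simp: Scnt_Suc)

lemma RS_sum: "Rcnt C k \<omega> + Scnt C k \<omega> = k"
  using Rcnt_le[of C k \<omega>] by (simp add: Scnt_def)

lemma Gam_0[simp]: "Gam w L 0 \<omega> = 0"
  by (simp add: Gam_def)

lemma Gam_Suc: "Gam w L (Suc m) \<omega> = Gam w L m \<omega> + w (L (Suc m) \<omega>)"
  by (simp add: Gam_def)

lemma Gam_add: "Gam w L (a + l) \<omega> - Gam w L a \<omega> = (\<Sum>j\<in>{a+1..a+l}. w (L j \<omega>))"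
  by (induction l) (auto simp: Gam_Suc)

lemma Gam_mono_diff:
  assumes "\<And>i. 0 \<le> w i" "\<And>i. w i \<le> 1" "a \<le> b"
  shows "0 \<le> Gam w L b \<omega> - Gam w L a \<omega> \<and> Gam w L b \<omega> - Gam w L a \<omega> \<le> real b - real a"
  using assms(3)
proof (induction b rule: dec_induct)
  case base then show ?case by simp
next
  case (step n)
  then show ?case using assms(1,2)[of "L (Suc n) \<omega>"] by (auto simp: Gam_Suc)
qed

lemma D_bound:
  assumes r01: "\<And>i. 0 \<le> r i \<and> r i \<le> 1" and s01: "\<And>i. 0 \<le> s i \<and> s i \<le> 1"
    and greedy: "\<And>n. n \<ge> 1 \<Longrightarrow>
        (Gam r LS (Scnt C n \<omega>) \<omega> > Gam s LR (Rcnt C n \<omega>) \<omega> \<longrightarrow> C (Suc n) \<omega>) \<and>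
        (Gam r LS (Scnt C n \<omega>) \<omega> < Gam s LR (Rcnt C n \<omega>) \<omega> \<longrightarrow> \<not> C (Suc n) \<omega>)"
  shows "\<bar>Gam r LS (Scnt C k \<omega>) \<omega> - Gam s LR (Rcnt C k \<omega>) \<omega>\<bar> \<le> 1"
proof (induction k)
  case 0 then show ?case by simp
next
  case (Suc k)
  define D where "D = Gam r LS (Scnt C k \<omega>) \<omega> - Gam s LR (Rcnt C k \<omega>) \<omega>"
  have D0: "k = 0 \<Longrightarrow> D = 0" by (simp add: D_def)
  show ?case
  proof (cases "C (Suc k) \<omega>")
    case True
    have "D \<ge> 0"
    proof (cases "k = 0")
      case True then show ?thesis using D0 by simp
    next
      case False
      then show ?thesis using greedy[of k] \<open>C (Suc k) \<omega>\<close> unfolding D_def by force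
    qed
    moreover have "Gam r LS (Scnt C (Suc k) \<omega>) \<omega> - Gam s LR (Rcnt C (Suc k) \<omega>) \<omega>
       = D - s (LR (Suc (Rcnt C k \<omega>)) \<omega>)"
      using True by (simp add: Scnt_Suc Rcnt_Suc Gam_Suc D_def)
    ultimately show ?thesis using Suc.IH s01[of "LR (Suc (Rcnt C k \<omega>)) \<omega>"] unfolding D_def
      by (simp add: abs_le_iff)
  next
    case False
    have "D \<le> 0"
    proof (cases "k = 0")
      case True then show ?thesis using D0 by simp
    next
      case F: False
      then show ?thesis using greedy[of k] \<open>\<not> C (Suc k) \<omega>\<close> unfolding D_def by force
    qed
    moreover have "Gam r LS (Scnt C (Suc k) \<omega>) \<omega> - Gam s LR (Rcnt C (Suc k) \<omega>) \<omega>
       = D + r (LS (Suc (Scnt C k \<omega>)) \<omega>)"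
      using False by (simp add: Scnt_Suc Rcnt_Suc Gam_Suc D_def)
    ultimately show ?thesis using Suc.IH r01[of "LS (Suc (Scnt C k \<omega>)) \<omega>"] unfolding D_def
      by (simp add: abs_le_iff)
  qed
qed

lemma nat_ivt:
  fixes f :: "nat \<Rightarrow> nat"
  assumes "f 0 = 0" "\<And>j. f (Suc j) \<le> f j + 1" "f m \<ge> h"
  shows "\<exists>j\<le>m. f j = h"
  using assms(3)
proof (induction m)
  case 0 then show ?case using assms(1) by auto
next
  case (Suc m)
  show ?case
  proof (cases "f m \<ge> h")
    case True then show ?thesis using Suc.IH by (meson le_Suc_eq)
  next
    case False
    then have "f (Suc m) = h" using Suc.prems assms(2)[of m] by linarith
    then show ?thesis by blast
  qed
qed

lemma stopT_le: "stopT C n \<omega> \<le> n"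
  by (simp add: stopT_def Let_def)

lemma stop_bound:
  assumes n: "n \<ge> 1" and k1: "k1 \<le> n" and T: "stopT C n \<omega> \<ge> k1"
  shows "Rcnt C k1 \<omega> \<le> nat \<lceil>real n / 2\<rceil> \<and> Scnt C k1 \<omega> \<le> nat \<lceil>real n / 2\<rceil>"
proof -
  define h where "h = nat \<lceil>real n / 2\<rceil> + 1"
  define P where "P = (\<lambda>k. 1 \<le> k \<and> (Scnt C (k+1) \<omega> = h \<or> Rcnt C (k+1) \<omega> = h))"
  have h2: "h \<ge> 2" using n unfolding h_def by linarith
  have Tdef: "stopT C n \<omega> = (if \<exists>k. P k then min n (LEAST k. P k) else n)"
    unfolding stopT_def h_def P_def Let_def by simp
  have key: "False" if f0: "f 0 = 0" and f1: "f 1 \<le> 1" and fs: "\<And>j. f (Suc j) \<le> f j + 1"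
    and fk: "f k1 \<ge> h" and fP: "\<And>k. 1 \<le> k \<Longrightarrow> f (k+1) = h \<Longrightarrow> P k" for f :: "nat \<Rightarrow> nat"
  proof -
    obtain j where j: "j \<le> k1" "f j = h" using nat_ivt[of f h k1, OF f0 fs fk] by blast
    have "j \<noteq> 0" using j f0 h2 by (metis not_numeral_le_zero)
    have "j \<noteq> 1" using j f1 h2 by auto
    then obtain k where k: "j = k + 1" "1 \<le> k" using \<open>j \<noteq> 0\<close> by (intro that[of "j - 1"]) auto
    have Pk: "P k" using fP[of k] k j by simp
    then have "(LEAST k. P k) \<le> k" by (rule Least_le)
    moreover have "stopT C n \<omega> = min n (LEAST k. P k)" using Tdef Pk by (simp only: if_P exI)
    ultimately have "stopT C n \<omega> < k1" using k j by linarith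
    then show False using T by simp
  qed
  have "Rcnt C k1 \<omega> < h"
  proof (rule ccontr)
    assume a: "\<not> Rcnt C k1 \<omega> < h"
    show False
    proof (rule key[of "\<lambda>k. Rcnt C k \<omega>"])
      show "Rcnt C 0 \<omega> = 0" by simp
      show "Rcnt C 1 \<omega> \<le> 1" using Rcnt_le[of C 1 \<omega>] .
      show "Rcnt C (Suc j) \<omega> \<le> Rcnt C j \<omega> + 1" for j by (simp add: Rcnt_Suc)
      show "h \<le> Rcnt C k1 \<omega>" using a by simp
      show "P k" if "1 \<le> k" "Rcnt C (k+1) \<omega> = h" for k using that unfolding P_def by blast
    qed
  qed
  moreover have "Scnt C k1 \<omega> < h"
  proof (rule ccontr)
    assume a: "\<not> Scnt C k1 \<omega> < h"
    show False
    proof (rule key[of "\<lambda>k. Scnt C k \<omega>"])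
      show "Scnt C 0 \<omega> = 0" by simp
      show "Scnt C 1 \<omega> \<le> 1" by (simp add: Scnt_def)
      show "Scnt C (Suc j) \<omega> \<le> Scnt C j \<omega> + 1" for j by (simp add: Scnt_Suc)
      show "h \<le> Scnt C k1 \<omega>" using a by simp
      show "P k" if "1 \<le> k" "Scnt C (k+1) \<omega> = h" for k using that unfolding P_def by blast
    qed
  qed
  ultimately show ?thesis unfolding h_def by simp
qed



lemma window_approx:
  fixes \<mu> \<epsilon> :: real and L0 :: nat
  assumes w01: "\<And>i. 0 \<le> w i \<and> w i \<le> 1" and mu: "0 \<le> \<mu>" "\<mu> \<le> 1" and eps: "0 \<le> \<epsilon>"
    and good: "\<forall>a\<le>N. \<forall>l. L0 \<le> l \<and> l \<le> N \<longrightarrow> \<bar>Gam w L (a+l) \<omega> - Gam w L a \<omega> - \<mu> * l\<bar> < \<epsilon> * l"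
    and a: "a \<le> N" and l: "l \<le> N"
  shows "\<bar>Gam w L (a+l) \<omega> - Gam w L a \<omega> - \<mu> * l\<bar> \<le> \<epsilon> * l + L0"
proof (cases "L0 \<le> l")
  case True
  then show ?thesis using good a l by force
next
  case False
  have "0 \<le> Gam w L (a+l) \<omega> - Gam w L a \<omega> \<and> Gam w L (a+l) \<omega> - Gam w L a \<omega> \<le> real (a+l) - real a"
    using w01 by (intro Gam_mono_diff) auto
  moreover have "0 \<le> \<mu> * l" "\<mu> * l \<le> l" using mu by (auto simp: mult_left_le_one_le)
  moreover have "0 \<le> \<epsilon> * l" using eps by simp
  ultimately show ?thesis using False by (simp add: abs_le_iff)
qed

lemma ratio_bound:
  fixes n :: nat and \<omega> :: 'a and \<mu> \<epsilon> :: real and L0 :: nat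
  assumes r01: "\<And>i. 0 \<le> r i \<and> r i \<le> 1" and s01: "\<And>i. 0 \<le> s i \<and> s i \<le> 1"
    and mu: "0 < \<mu>" "\<mu> \<le> 1" and eps: "0 \<le> \<epsilon>"
    and D: "\<And>k. \<bar>Gam r LS (Scnt C k \<omega>) \<omega> - Gam s LR (Rcnt C k \<omega>) \<omega>\<bar> \<le> 1"
    and goodR: "\<forall>a\<le>n. \<forall>l. L0 \<le> l \<and> l \<le> n \<longrightarrow> \<bar>Gam s LR (a+l) \<omega> - Gam s LR a \<omega> - \<mu> * l\<bar> < \<epsilon> * l"
    and goodS: "\<forall>a\<le>n. \<forall>l. L0 \<le> l \<and> l \<le> n \<longrightarrow> \<bar>Gam r LS (a+l) \<omega> - Gam r LS a \<omega> - \<mu> * l\<bar> < \<epsilon> * l"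
    and T: "T < n"
  shows "\<bar>(real (Rcnt C n \<omega>) - real (Rcnt C T \<omega>)) / (real n - real T) - 1/2\<bar>
           \<le> (2 + \<epsilon> * (real n - real T) + 2 * L0) / (2 * \<mu> * (real n - real T))"
proof -
  define a where "a = Rcnt C T \<omega>"
  define lR where "lR = Rcnt C n \<omega> - Rcnt C T \<omega>"
  define b where "b = Scnt C T \<omega>"
  define lS where "lS = Scnt C n \<omega> - Scnt C T \<omega>"
  have Rm: "Rcnt C T \<omega> \<le> Rcnt C n \<omega>" and Sm: "Scnt C T \<omega> \<le> Scnt C n \<omega>"
    using T by (auto intro: Rcnt_mono Scnt_mono)
  have aR: "a + lR = Rcnt C n \<omega>" using Rm by (simp add: a_def lR_def)
  have bS: "b + lS = Scnt C n \<omega>" using Sm by (simp add: b_def lS_def)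
  have sum: "real lR + real lS = real n - real T"
    using RS_sum[of C n \<omega>] RS_sum[of C T \<omega>] Rm Sm T unfolding lR_def lS_def by linarith
  have bnd: "a \<le> n" "lR \<le> n" "b \<le> n" "lS \<le> n"
    using Rcnt_le[of C n \<omega>] Rcnt_le[of C T \<omega>] Scnt_def[of C n \<omega>] Scnt_def[of C T \<omega>] T
    unfolding a_def lR_def b_def lS_def by auto
  have wR: "\<bar>Gam s LR (a+lR) \<omega> - Gam s LR a \<omega> - \<mu> * lR\<bar> \<le> \<epsilon> * lR + L0"
    using s01 mu eps goodR bnd by (intro window_approx) auto
  have wS: "\<bar>Gam r LS (b+lS) \<omega> - Gam r LS b \<omega> - \<mu> * lS\<bar> \<le> \<epsilon> * lS + L0"
    using r01 mu eps goodS bnd by (intro window_approx) auto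
  have Dn: "\<bar>Gam r LS (b+lS) \<omega> - Gam s LR (a+lR) \<omega>\<bar> \<le> 1" using D[of n] aR bS by simp
  have DT: "\<bar>Gam r LS b \<omega> - Gam s LR a \<omega>\<bar> \<le> 1" using D[of T] unfolding a_def b_def by simp
  have key: "\<mu> * \<bar>real lR - real lS\<bar> \<le> 2 + \<epsilon> * (real n - real T) + 2 * L0"
  proof -
    have "\<mu> * \<bar>real lR - real lS\<bar> = \<bar>\<mu> * lR - \<mu> * lS\<bar>"
      using mu by (subst right_diff_distrib[symmetric]) (simp add: abs_mult)
    also have "\<dots> \<le> 2 + \<epsilon> * lR + \<epsilon> * lS + 2 * L0"
      using wR wS Dn DT by (simp add: abs_le_iff)
    also have "\<dots> = 2 + \<epsilon> * (real n - real T) + 2 * L0"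
      using sum by (simp add: distrib_left[symmetric])
    finally show ?thesis .
  qed
  have m: "real n - real T > 0" using T by simp
  have "(real (Rcnt C n \<omega>) - real (Rcnt C T \<omega>)) / (real n - real T) - 1/2
        = (real lR - real lS) / (2 * (real n - real T))"
    using sum m Rm unfolding lR_def by (simp add: field_simps of_nat_diff)
  then have "\<bar>(real (Rcnt C n \<omega>) - real (Rcnt C T \<omega>)) / (real n - real T) - 1/2\<bar>
        = \<bar>real lR - real lS\<bar> / (2 * (real n - real T))" using m by simp
  also have "\<dots> = (\<mu> * \<bar>real lR - real lS\<bar>) / (2 * \<mu> * (real n - real T))"
    using mu by simp
  also have "\<dots> \<le> (2 + \<epsilon> * (real n - real T) + 2 * L0) / (2 * \<mu> * (real n - real T))"
    using key m mu by (intro divide_right_mono) auto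
  finally show ?thesis .
qed

lemma imbalance_bound:
  fixes n k1 :: nat
  assumes r01: "\<And>i. 0 \<le> r i \<and> r i \<le> 1" and s01: "\<And>i. 0 \<le> s i \<and> s i \<le> 1"
    and D: "\<bar>Gam r LS (Scnt C k1 \<omega>) \<omega> - Gam s LR (Rcnt C k1 \<omega>) \<omega>\<bar> \<le> 1"
    and n: "n \<ge> 1" and k1: "k1 \<le> n" and T: "stopT C n \<omega> \<ge> k1"
  shows "\<bar>Gam s LR (k1 div 2) \<omega> - Gam r LS (k1 div 2) \<omega>\<bar> \<le> real n - real k1 + 5"
proof -
  define q where "q = k1 div 2"
  define R where "R = Rcnt C k1 \<omega>"
  have b: "R \<le> nat \<lceil>real n / 2\<rceil>" "k1 - R \<le> nat \<lceil>real n / 2\<rceil>"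
    using stop_bound[OF n k1 T] unfolding R_def Scnt_def by auto
  have c: "real (nat \<lceil>real n / 2\<rceil>) \<le> real n / 2 + 1"
    using of_int_ceiling_le_add_one[of "real n / 2"] by simp
  have Rk: "R \<le> k1" unfolding R_def by (rule Rcnt_le)
  have q: "2 * q \<le> k1" "k1 \<le> 2 * q + 1" unfolding q_def by auto
  define cN where "cN = nat \<lceil>real n / 2\<rceil>"
  have b': "real R \<le> real cN" "real k1 - real R \<le> real cN" "2 * real cN \<le> real n + 2"
    using b c Rk unfolding cN_def[symmetric] by (auto simp: of_nat_diff)
  have q': "2 * real q \<le> real k1" "real k1 \<le> 2 * real q + 1" using q by linarith+
  have Rq: "2 * \<bar>real R - real q\<bar> \<le> real n - real k1 + 3"
  proof -
    have "2 * real R - 2 * real q \<le> real n - real k1 + 3" using b' q' by linarith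
    moreover have "2 * real q - 2 * real R \<le> real n - real k1 + 3" using b' q' by linarith
    ultimately show ?thesis by (cases "real R \<le> real q") (simp_all add: abs_if)
  qed
  have g1: "\<bar>Gam s LR R \<omega> - Gam s LR q \<omega>\<bar> \<le> \<bar>real R - real q\<bar>"
  proof (cases "q \<le> R")
    case True then show ?thesis using Gam_mono_diff[of s q R LR \<omega>] s01 by (simp add: abs_le_iff) 
  next
    case False then show ?thesis using Gam_mono_diff[of s R q LR \<omega>] s01 by (simp add: abs_le_iff)
  qed
  have g2: "\<bar>Gam r LS (k1 - R) \<omega> - Gam r LS (k1 - q) \<omega>\<bar> \<le> \<bar>real R - real q\<bar>"
  proof (cases "q \<le> R")
    case True then show ?thesis using Gam_mono_diff[of r "k1 - R" "k1 - q" LS \<omega>] r01 q Rk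
      by (simp add: abs_le_iff of_nat_diff)
  next
    case False then show ?thesis using Gam_mono_diff[of r "k1 - q" "k1 - R" LS \<omega>] r01 q Rk
      by (simp add: abs_le_iff of_nat_diff)
  qed
  have g3: "\<bar>Gam r LS (k1 - q) \<omega> - Gam r LS q \<omega>\<bar> \<le> 1"
  proof -
    have qq: "q \<le> k1 - q" using q by simp
    have "real (k1 - q) - real q \<le> 1" using q by (simp add: of_nat_diff)
    then show ?thesis using Gam_mono_diff[of r q "k1 - q" LS \<omega>, OF _ _ qq] r01 by (simp add: abs_le_iff)
  qed
  have D': "\<bar>Gam r LS (k1 - R) \<omega> - Gam s LR R \<omega>\<bar> \<le> 1"
    using D unfolding R_def Scnt_def .
  show ?thesis using g1 g2 g3 D' Rq unfolding q_def[symmetric] by (simp add: abs_le_iff)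
qed



lemma sums_bounds:
  fixes r :: "nat \<Rightarrow> real"
  assumes "\<And>i. r i \<ge> 0" "r sums 1"
  shows "r i \<le> 1"
proof -
  have "sum r {i} \<le> suminf r"
    using assms by (intro sum_le_suminf) (auto simp: sums_iff)
  then show ?thesis using assms(2) by (simp add: sums_iff)
qed

lemma (in prob_space) expectation_discrete:
  fixes X :: "'a \<Rightarrow> nat" and f p :: "nat \<Rightarrow> real"
  assumes X: "X \<in> measurable M (count_space UNIV)"
    and p: "\<And>i. measure M {\<omega> \<in> space M. X \<omega> = i} = p i"
    and f: "\<And>i. 0 \<le> f i" and pf: "summable (\<lambda>i. p i * f i)"
  shows "expectation (\<lambda>\<omega>. f (X \<omega>)) = (\<Sum>i. p i * f i)"
proof -
  have meas: "{\<omega> \<in> space M. X \<omega> = i} \<in> sets M" for i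
    using X by measurable
  have p0: "0 \<le> p i" for i using p[of i] by (metis measure_nonneg)
  have pt: "ennreal (f (X \<omega>)) = (\<Sum>i. ennreal (f i) * indicator {\<omega> \<in> space M. X \<omega> = i} \<omega>)"
    if "\<omega> \<in> space M" for \<omega>
  proof -
    have "(\<lambda>i. ennreal (f i) * indicator {\<omega> \<in> space M. X \<omega> = i} \<omega>)
        = (\<lambda>i. if i = X \<omega> then ennreal (f i) else 0)"
      using that by (auto simp: indicator_def)
    then show ?thesis using sums_unique[OF sums_single[of "X \<omega>" "\<lambda>i. ennreal (f i)"]] by simp
  qed
  have "(\<integral>\<^sup>+\<omega>. ennreal (f (X \<omega>)) \<partial>M)
      = (\<integral>\<^sup>+\<omega>. (\<Sum>i. ennreal (f i) * indicator {\<omega> \<in> space M. X \<omega> = i} \<omega>) \<partial>M)"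
    using pt by (intro nn_integral_cong) auto
  also have "\<dots> = (\<Sum>i. \<integral>\<^sup>+\<omega>. ennreal (f i) * indicator {\<omega> \<in> space M. X \<omega> = i} \<omega> \<partial>M)"
    using meas by (intro nn_integral_suminf) auto
  also have "\<dots> = (\<Sum>i. ennreal (p i * f i))"
    using meas p p0 f by (simp add: nn_integral_cmult_indicator emeasure_eq_measure ennreal_mult' mult.commute)
  also have "\<dots> = ennreal (\<Sum>i. p i * f i)"
    using p0 f pf by (intro suminf_ennreal2) auto
  finally have eq: "(\<integral>\<^sup>+\<omega>. ennreal (f (X \<omega>)) \<partial>M) = ennreal (\<Sum>i. p i * f i)" .
  have "expectation (\<lambda>\<omega>. f (X \<omega>)) = enn2real (\<integral>\<^sup>+\<omega>. ennreal (f (X \<omega>)) \<partial>M)"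
    using f X by (intro enn2real_nn_integral_eq_integral[symmetric]) auto
  also have "\<dots> = (\<Sum>i. p i * f i)"
    using eq p0 f by (simp add: suminf_nonneg pf)
  finally show ?thesis .
qed

lemma (in prob_space) indep_sets_reindex:
  assumes ind: "indep_sets F (g ` I)" and inj: "inj_on g I"
  shows "indep_sets (\<lambda>i. F (g i)) I"
  unfolding indep_sets_def
proof (intro conjI ballI allI impI)
  fix i assume "i \<in> I" then show "F (g i) \<subseteq> events" using ind by (auto simp: indep_sets_def)
next
  fix J A assume J: "J \<subseteq> I" "J \<noteq> {}" "finite J" and A: "A \<in> Pi J (\<lambda>i. F (g i))"
  define A' where "A' = (\<lambda>y. A (the_inv_into J g y))"
  have injJ: "inj_on g J" using inj J by (metis inj_on_subset)
  have A'g: "A' (g j) = A j" if "j \<in> J" for j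
    using injJ that unfolding A'_def by (simp add: the_inv_into_f_f)
  have "A' \<in> Pi (g ` J) F" using A A'g by auto
  then have "prob (\<Inter>y\<in>g ` J. A' y) = (\<Prod>y\<in>g ` J. prob (A' y))"
    using ind J unfolding indep_sets_def by (metis finite_imageI image_is_empty image_mono)
  moreover have "(\<Inter>y\<in>g ` J. A' y) = (\<Inter>j\<in>J. A j)" using A'g by auto
  moreover have "(\<Prod>y\<in>g ` J. prob (A' y)) = (\<Prod>j\<in>J. prob (A j))"
    using injJ A'g by (simp add: prod.reindex)
  ultimately show "prob (\<Inter>j\<in>J. A j) = (\<Prod>j\<in>J. prob (A j))" by simp
qed

lemma (in prob_space) indep_vars_reindex:
  assumes ind: "indep_vars M' X (g ` I)" and inj: "inj_on g I"
  shows "indep_vars (\<lambda>i. M' (g i)) (\<lambda>i. X (g i)) I"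
  using ind unfolding indep_vars_def2
  by (auto intro!: indep_sets_reindex[OF _ inj])



locale sysm = prob_space M for M :: "'a measure" +
  fixes r s :: "nat \<Rightarrow> real" and LR LS :: "nat \<Rightarrow> 'a \<Rightarrow> nat" and F0 :: "'a set set"
  assumes r_nonneg: "\<And>i. r i \<ge> 0" and r_sum: "r sums 1"
    and s_nonneg: "\<And>i. s i \<ge> 0" and s_sum: "s sums 1"
    and mu_pos: "(\<Sum>i. r i * s i) > 0"
    and LR_meas: "\<And>j. j \<ge> 1 \<Longrightarrow> LR j \<in> measurable M (count_space UNIV)"
    and LS_meas: "\<And>j. j \<ge> 1 \<Longrightarrow> LS j \<in> measurable M (count_space UNIV)"
    and LR_dist: "\<And>j i. j \<ge> 1 \<Longrightarrow> measure M {\<omega> \<in> space M. LR j \<omega> = i} = r i"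
    and LS_dist: "\<And>j i. j \<ge> 1 \<Longrightarrow> measure M {\<omega> \<in> space M. LS j \<omega> = i} = s i"
    and indep: "indep_sets
        (\<lambda>i. case i of None \<Rightarrow> F0
                     | Some (True, j) \<Rightarrow> rv_sets M (LR j)
                     | Some (False, j) \<Rightarrow> rv_sets M (LS j))
        ({None} \<union> Some ` (UNIV \<times> {1..}))"
    and sigma_pos: "sqrt (variance (\<lambda>\<omega>. s (LR 1 \<omega>)))
                    + sqrt (variance (\<lambda>\<omega>. r (LS 1 \<omega>))) > 0"
begin

definition "mu = (\<Sum>i. r i * s i)"

lemma r01: "0 \<le> r i \<and> r i \<le> 1" using r_nonneg sums_bounds[OF r_nonneg r_sum] by auto
lemma s01: "0 \<le> s i \<and> s i \<le> 1" using s_nonneg sums_bounds[OF s_nonneg s_sum] by auto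

lemma summable_rs: "summable (\<lambda>i. r i * s i)"
proof (rule summable_comparison_test'[where g = r])
  show "summable r" using r_sum by (simp add: sums_iff)
  show "norm (r n * s n) \<le> r n" for n using r01[of n] s01[of n] mult_left_le[of "s n" "r n"] by simp
qed

lemma mu_pos': "0 < mu" using mu_pos by (simp add: mu_def)

lemma mu_le1: "mu \<le> 1"
proof -
  have "mu \<le> suminf r" unfolding mu_def
    using r01 s01 summable_rs r_sum mult_left_le by (intro suminf_le) (auto simp: sums_iff)
  then show ?thesis using r_sum by (simp add: sums_iff)
qed

lemma E_R: "j \<ge> 1 \<Longrightarrow> expectation (\<lambda>\<omega>. s (LR j \<omega>)) = mu"
  unfolding mu_def using LR_meas LR_dist s01 summable_rs
  by (subst expectation_discrete[where p = r]) auto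

lemma E_S: "j \<ge> 1 \<Longrightarrow> expectation (\<lambda>\<omega>. r (LS j \<omega>)) = mu"
  unfolding mu_def using LS_meas LS_dist r01 summable_rs
  by (subst expectation_discrete[where p = s]) (auto simp: mult.commute)

definition Z :: "bool \<times> nat \<Rightarrow> 'a \<Rightarrow> nat" where
  "Z = (\<lambda>(b, j). if b then LR j else LS j)"

lemma indep_Z: "indep_vars (\<lambda>_. count_space UNIV) Z (UNIV \<times> {1..})"
proof -
  let ?F = "(\<lambda>i. case i of None \<Rightarrow> F0
                     | Some (True, j) \<Rightarrow> rv_sets M (LR j)
                     | Some (False, j) \<Rightarrow> rv_sets M (LS j))"
  have "indep_sets ?F (Some ` (UNIV \<times> {1..}))"
    by (rule indep_sets_mono_index[OF _ indep]) auto
  then have "indep_sets (\<lambda>i. ?F (Some i)) (UNIV \<times> {1..})"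
    by (rule indep_sets_reindex) auto
  moreover have "?F (Some i) = {Z i -` A \<inter> space M | A. A \<in> sets (count_space UNIV)}" for i
    by (cases i) (auto simp: Z_def rv_sets_def split: bool.split)
  ultimately have "indep_sets (\<lambda>i. {Z i -` A \<inter> space M | A. A \<in> sets (count_space UNIV)}) (UNIV \<times> {1..})"
    by simp
  moreover have "\<forall>i\<in>UNIV \<times> {1..}. random_variable (count_space UNIV) (Z i)"
    using LR_meas LS_meas by (auto simp: Z_def)
  ultimately show ?thesis unfolding indep_vars_def2 by simp
qed

lemma indep_R: "indep_vars (\<lambda>_. borel) (\<lambda>j \<omega>. s (LR j \<omega>)) {1..}"
proof -
  have "indep_vars (\<lambda>_. count_space UNIV) Z ((\<lambda>j. (True, j)) ` {1..})"
    by (rule indep_vars_subset[OF indep_Z]) auto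
  from indep_vars_reindex[OF this]
  have "indep_vars (\<lambda>_. count_space UNIV) (\<lambda>j. Z (True, j)) {1..}"
    by (auto simp: inj_on_def)
  then have "indep_vars (\<lambda>_. count_space UNIV) LR {1..}" by (simp add: Z_def)
  then show ?thesis by (rule indep_vars_compose2) auto
qed

lemma indep_S: "indep_vars (\<lambda>_. borel) (\<lambda>j \<omega>. r (LS j \<omega>)) {1..}"
proof -
  have "indep_vars (\<lambda>_. count_space UNIV) Z ((\<lambda>j. (False, j)) ` {1..})"
    by (rule indep_vars_subset[OF indep_Z]) auto
  from indep_vars_reindex[OF this]
  have "indep_vars (\<lambda>_. count_space UNIV) (\<lambda>j. Z (False, j)) {1..}"
    by (auto simp: inj_on_def)
  then have "indep_vars (\<lambda>_. count_space UNIV) LS {1..}" by (simp add: Z_def)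
  then show ?thesis by (rule indep_vars_compose2) auto
qed

lemma indep_pair: "j \<ge> 1 \<Longrightarrow> indep_var (count_space UNIV) (LR j) (count_space UNIV) (LS j)"
proof -
  assume j: "j \<ge> 1"
  have "indep_vars (\<lambda>_. count_space UNIV) Z ((\<lambda>b. (b, j)) ` UNIV)"
    using j by (intro indep_vars_subset[OF indep_Z]) auto
  from indep_vars_reindex[OF this]
  have "indep_vars (\<lambda>_. count_space UNIV) (\<lambda>b. Z (b, j)) UNIV"
    by (auto simp: inj_on_def)
  moreover have "(\<lambda>b. Z (b, j)) = case_bool (LR j) (LS j)"
    by (auto simp: Z_def fun_eq_iff split: bool.split)
  moreover have "(\<lambda>_::bool. count_space UNIV) = case_bool (count_space UNIV) (count_space UNIV :: nat measure)"
    by (auto simp: fun_eq_iff split: bool.split)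
  ultimately show ?thesis unfolding indep_var_def by metis
qed

end


context prob_space
begin

lemma Gam_meas:
  assumes "\<And>j. j \<ge> 1 \<Longrightarrow> Lab j \<in> measurable M (count_space UNIV)"
  shows "(\<lambda>\<omega>. Gam w Lab m \<omega>) \<in> borel_measurable M"
  unfolding Gam_def
proof (intro borel_measurable_sum)
  fix j assume "j \<in> {1..m}"
  then have "Lab j \<in> measurable M (count_space UNIV)" using assms by auto
  then show "(\<lambda>\<omega>. w (Lab j \<omega>)) \<in> borel_measurable M"
    by (rule measurable_compose) auto
qed

lemma window_prob:
  fixes w :: "nat \<Rightarrow> real" and Lab :: "nat \<Rightarrow> 'a \<Rightarrow> nat" and \<mu> \<epsilon> :: real
  assumes meas: "\<And>j. j \<ge> 1 \<Longrightarrow> Lab j \<in> measurable M (count_space UNIV)"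
    and ind: "indep_vars (\<lambda>_. borel) (\<lambda>j \<omega>. w (Lab j \<omega>)) {1..}"
    and E: "\<And>j. j \<ge> 1 \<Longrightarrow> expectation (\<lambda>\<omega>. w (Lab j \<omega>)) = \<mu>"
    and w01: "\<And>i. 0 \<le> w i \<and> w i \<le> 1"
    and l: "l \<ge> 1" and eps: "\<epsilon> \<ge> 0"
  shows "prob {\<omega> \<in> space M. \<bar>Gam w Lab (a+l) \<omega> - Gam w Lab a \<omega> - \<mu> * l\<bar> \<ge> \<epsilon> * l}
           \<le> 2 * exp (-2 * \<epsilon>\<^sup>2 * l)"
proof -
  define I where "I = {a+1..a+l}"
  define X where "X = (\<lambda>j \<omega>. w (Lab j \<omega>))"
  have I1: "I \<subseteq> {1..}" unfolding I_def by auto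
  have cI: "card I = l" unfolding I_def by simp
  interpret H: Hoeffding_ineq M I X "\<lambda>_. 0" "\<lambda>_. 1" "\<Sum>i\<in>I. expectation (X i)"
  proof unfold_locales
    show "finite I" unfolding I_def by simp
    show "indep_vars (\<lambda>_. borel) X I" unfolding X_def using ind I1 by (rule indep_vars_subset)
    show "AE x in M. X i x \<in> {0..1}" if "i \<in> I" for i using w01 unfolding X_def by auto
  qed simp
  have muI: "(\<Sum>i\<in>I. expectation (X i)) = real l * \<mu>"
    using I1 E cI unfolding X_def by (subst sum.cong[OF refl, of _ _ "\<lambda>_. \<mu>"]) auto
  have sq: "(\<Sum>i\<in>I. ((1::real) - 0)\<^sup>2) = real l" using cI by simp
  have "prob {x\<in>space M. \<bar>(\<Sum>i\<in>I. X i x) - (\<Sum>i\<in>I. expectation (X i))\<bar> \<ge> \<epsilon> * l}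
        \<le> 2 * exp (-2 * (\<epsilon> * l)\<^sup>2 / (\<Sum>i\<in>I. ((1::real) - 0)\<^sup>2))"
    using eps l sq by (intro H.Hoeffding_ineq_abs_ge) auto
  also have "-2 * (\<epsilon> * l)\<^sup>2 / (\<Sum>i\<in>I. ((1::real) - 0)\<^sup>2) = -2 * \<epsilon>\<^sup>2 * l"
    using sq l by (simp add: power2_eq_square)
  also have "{x\<in>space M. \<bar>(\<Sum>i\<in>I. X i x) - (\<Sum>i\<in>I. expectation (X i))\<bar> \<ge> \<epsilon> * l}
       = {\<omega> \<in> space M. \<bar>Gam w Lab (a+l) \<omega> - Gam w Lab a \<omega> - \<mu> * l\<bar> \<ge> \<epsilon> * l}"
    using muI unfolding X_def I_def Gam_add by (simp add: mult.commute)
  finally show ?thesis .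
qed

lemma bad_windows:
  fixes w :: "nat \<Rightarrow> real" and Lab :: "nat \<Rightarrow> 'a \<Rightarrow> nat" and \<mu> \<epsilon> :: real
  assumes meas: "\<And>j. j \<ge> 1 \<Longrightarrow> Lab j \<in> measurable M (count_space UNIV)"
    and ind: "indep_vars (\<lambda>_. borel) (\<lambda>j \<omega>. w (Lab j \<omega>)) {1..}"
    and E: "\<And>j. j \<ge> 1 \<Longrightarrow> expectation (\<lambda>\<omega>. w (Lab j \<omega>)) = \<mu>"
    and w01: "\<And>i. 0 \<le> w i \<and> w i \<le> 1"
    and L: "L \<ge> 1" and eps: "\<epsilon> \<ge> 0"
  shows "prob {\<omega> \<in> space M. \<exists>a\<le>n. \<exists>l. L \<le> l \<and> l \<le> n \<and>
             \<bar>Gam w Lab (a+l) \<omega> - Gam w Lab a \<omega> - \<mu> * l\<bar> \<ge> \<epsilon> * l}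
           \<le> (real n + 1)\<^sup>2 * (2 * exp (-2 * \<epsilon>\<^sup>2 * L))"
proof -
  define A where "A = (\<lambda>(a, l). {\<omega> \<in> space M. \<bar>Gam w Lab (a+l) \<omega> - Gam w Lab a \<omega> - \<mu> * l\<bar> \<ge> \<epsilon> * l})"
  define K where "K = {..n} \<times> {L..n}"
  have set_eq: "{\<omega> \<in> space M. \<exists>a\<le>n. \<exists>l. L \<le> l \<and> l \<le> n \<and>
             \<bar>Gam w Lab (a+l) \<omega> - Gam w Lab a \<omega> - \<mu> * l\<bar> \<ge> \<epsilon> * l} = (\<Union>k\<in>K. A k)"
    unfolding A_def K_def by (auto; meson atLeastAtMost_iff atMost_iff)
  have Ameas: "A k \<in> sets M" for k
  proof -
    obtain a l where k: "k = (a, l)" by (cases k)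
    have "(\<lambda>\<omega>. Gam w Lab (a+l) \<omega>) \<in> borel_measurable M" "(\<lambda>\<omega>. Gam w Lab a \<omega>) \<in> borel_measurable M"
      using meas by (auto intro: Gam_meas)
    then show ?thesis unfolding A_def k prod.case by measurable
  qed
  have "prob (\<Union>k\<in>K. A k) \<le> (\<Sum>k\<in>K. prob (A k))"
    using Ameas unfolding K_def by (intro measure_UNION_le) auto
  also have "\<dots> \<le> (\<Sum>k\<in>K. 2 * exp (-2 * \<epsilon>\<^sup>2 * L))"
  proof (intro sum_mono)
    fix k assume "k \<in> K"
    then obtain a l where k: "k = (a, l)" "L \<le> l" unfolding K_def by auto
    have "prob (A k) \<le> 2 * exp (-2 * \<epsilon>\<^sup>2 * l)"
      unfolding A_def k prod.case using L k eps by (intro window_prob[OF meas ind E w01]) auto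
    also have "\<dots> \<le> 2 * exp (-2 * \<epsilon>\<^sup>2 * L)"
      using k(2) by (simp add: mult_left_mono)
    finally show "prob (A k) \<le> 2 * exp (-2 * \<epsilon>\<^sup>2 * L)" .
  qed
  also have "\<dots> = real (card K) * (2 * exp (-2 * \<epsilon>\<^sup>2 * L))" by simp
  also have "\<dots> \<le> (real n + 1)\<^sup>2 * (2 * exp (-2 * \<epsilon>\<^sup>2 * L))"
  proof (intro mult_right_mono)
    have c1: "card K = (n + 1) * card {L..n}" unfolding K_def by (simp add: card_cartesian_product)
    have c2: "card {L..n} \<le> n + 1" by simp
    have "card K \<le> (n + 1) * (n + 1)" unfolding c1 using c2 by (rule mult_le_mono2)
    then have "real (card K) \<le> (real n + 1) * (real n + 1)"
      by (metis of_nat_Suc of_nat_le_iff of_nat_mult Suc_eq_plus1 add.commute)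
    then show "real (card K) \<le> (real n + 1)\<^sup>2" by (simp add: power2_eq_square)
  qed auto
  finally show ?thesis using set_eq by simp
qed

end


context sysm
begin

definition Y :: "nat \<Rightarrow> 'a \<Rightarrow> real" where
  "Y i \<omega> = s (LR (Suc i) \<omega>) - r (LS (Suc i) \<omega>)"

lemma LR_meas'[measurable]: "LR (Suc j) \<in> measurable M (count_space UNIV)" using LR_meas by simp
lemma LS_meas'[measurable]: "LS (Suc j) \<in> measurable M (count_space UNIV)" using LS_meas by simp
lemma LR1_meas[measurable]: "LR 1 \<in> measurable M (count_space UNIV)" using LR_meas by simp
lemma LS1_meas[measurable]: "LS 1 \<in> measurable M (count_space UNIV)" using LS_meas by simp

lemma intb:
  fixes f :: "'a \<Rightarrow> real"
  assumes "f \<in> borel_measurable M" "\<And>\<omega>. \<omega> \<in> space M \<Longrightarrow> \<bar>f \<omega>\<bar> \<le> B"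
  shows "integrable M f"
  using assms by (intro integrable_const_bound[where B = B]) auto

lemma Y_meas[measurable]: "Y i \<in> borel_measurable M"
  unfolding Y_def by measurable

lemma sR_meas[measurable]: "(\<lambda>\<omega>. s (LR (Suc j) \<omega>)) \<in> borel_measurable M" by measurable
lemma rS_meas[measurable]: "(\<lambda>\<omega>. r (LS (Suc j) \<omega>)) \<in> borel_measurable M" by measurable

lemma Y_bound: "\<bar>Y i \<omega>\<bar> \<le> 1"
  using r01[of "LS (Suc i) \<omega>"] s01[of "LR (Suc i) \<omega>"] unfolding Y_def by (simp add: abs_le_iff)

lemma Y_sum: "(\<Sum>i<q. Y i \<omega>) = Gam s LR q \<omega> - Gam r LS q \<omega>"
  by (induction q) (auto simp: Y_def Gam_Suc)

lemma indep_Y: "indep_vars (\<lambda>_. borel) Y UNIV"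
proof -
  define K where "K = (\<lambda>i::nat. {(True, Suc i), (False, Suc i)})"
  have "indep_vars (\<lambda>i. PiM (K i) (\<lambda>_. count_space UNIV)) (\<lambda>i \<omega>. restrict (\<lambda>k. Z k \<omega>) (K i)) UNIV"
    by (rule indep_vars_restrict[OF indep_Z]) (auto simp: K_def disjoint_family_on_def)
  then have "indep_vars (\<lambda>_. borel) (\<lambda>i \<omega>. (\<lambda>f. s (f (True, Suc i)) - r (f (False, Suc i))) (restrict (\<lambda>k. Z k \<omega>) (K i))) UNIV"
  proof (rule indep_vars_compose2)
    fix i :: nat
    have m1: "(\<lambda>f. f (True, Suc i)) \<in> measurable (PiM (K i) (\<lambda>_. count_space UNIV)) (count_space UNIV)"
      by (rule measurable_component_singleton) (simp add: K_def)
    have m2: "(\<lambda>f. f (False, Suc i)) \<in> measurable (PiM (K i) (\<lambda>_. count_space UNIV)) (count_space UNIV)"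
      by (rule measurable_component_singleton) (simp add: K_def)
    have "(\<lambda>f. s (f (True, Suc i))) \<in> borel_measurable (PiM (K i) (\<lambda>_. count_space UNIV))"
      using m1 by (rule measurable_compose) simp
    moreover have "(\<lambda>f. r (f (False, Suc i))) \<in> borel_measurable (PiM (K i) (\<lambda>_. count_space UNIV))"
      using m2 by (rule measurable_compose) simp
    ultimately show "(\<lambda>f. s (f (True, Suc i)) - r (f (False, Suc i))) \<in> borel_measurable (PiM (K i) (\<lambda>_. count_space UNIV))"
      by (rule borel_measurable_diff)
  qed
  moreover have "(\<lambda>f. s (f (True, Suc i)) - r (f (False, Suc i))) (restrict (\<lambda>k. Z k \<omega>) (K i)) = Y i \<omega>" for i \<omega>
    by (simp add: K_def Z_def Y_def)
  ultimately show ?thesis by simp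
qed

lemma distr_LR: "j \<ge> 1 \<Longrightarrow> distr M (count_space UNIV) (LR j) = distr M (count_space UNIV) (LR 1)"
proof (rule measure_eqI_countable)
  assume j: "j \<ge> 1"
  show "sets (distr M (count_space UNIV) (LR j)) = Pow UNIV" by simp
  show "sets (distr M (count_space UNIV) (LR 1)) = Pow UNIV" by simp
  show "countable (UNIV :: nat set)" by simp
  fix a :: nat
  have e: "emeasure (distr M (count_space UNIV) (LR k)) {a} = ennreal (r a)" if "k \<ge> 1" for k
  proof -
    have "emeasure (distr M (count_space UNIV) (LR k)) {a} = emeasure M (LR k -` {a} \<inter> space M)"
      using LR_meas[OF that] by (intro emeasure_distr) auto
    also have "LR k -` {a} \<inter> space M = {\<omega> \<in> space M. LR k \<omega> = a}" by auto
    also have "emeasure M \<dots> = ennreal (r a)"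
      using LR_dist[OF that] LR_meas[OF that] by (simp add: emeasure_eq_measure)
    finally show ?thesis .
  qed
  show "emeasure (distr M (count_space UNIV) (LR j)) {a} = emeasure (distr M (count_space UNIV) (LR 1)) {a}"
    using e[of j] e[of 1] j by simp
qed

lemma distr_LS: "j \<ge> 1 \<Longrightarrow> distr M (count_space UNIV) (LS j) = distr M (count_space UNIV) (LS 1)"
proof (rule measure_eqI_countable)
  assume j: "j \<ge> 1"
  show "sets (distr M (count_space UNIV) (LS j)) = Pow UNIV" by simp
  show "sets (distr M (count_space UNIV) (LS 1)) = Pow UNIV" by simp
  show "countable (UNIV :: nat set)" by simp
  fix a :: nat
  have e: "emeasure (distr M (count_space UNIV) (LS k)) {a} = ennreal (s a)" if "k \<ge> 1" for k
  proof -
    have "emeasure (distr M (count_space UNIV) (LS k)) {a} = emeasure M (LS k -` {a} \<inter> space M)"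
      using LS_meas[OF that] by (intro emeasure_distr) auto
    also have "LS k -` {a} \<inter> space M = {\<omega> \<in> space M. LS k \<omega> = a}" by auto
    also have "emeasure M \<dots> = ennreal (s a)"
      using LS_dist[OF that] LS_meas[OF that] by (simp add: emeasure_eq_measure)
    finally show ?thesis .
  qed
  show "emeasure (distr M (count_space UNIV) (LS j)) {a} = emeasure (distr M (count_space UNIV) (LS 1)) {a}"
    using e[of j] e[of 1] j by simp
qed

lemma distr_Y: "distr M borel (Y i) = distr M borel (Y 0)"
proof -
  define g where "g = (\<lambda>(a::nat, b::nat). s a - r b)"
  have cc: "count_space UNIV \<Otimes>\<^sub>M count_space UNIV = (count_space UNIV :: (nat \<times> nat) measure)"
    by (simp add: pair_measure_countable)
  have gm: "g \<in> borel_measurable (count_space UNIV \<Otimes>\<^sub>M count_space UNIV)"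
    unfolding cc by simp
  have D: "distr M borel (Y k) = distr (distr M (count_space UNIV) (LR 1) \<Otimes>\<^sub>M distr M (count_space UNIV) (LS 1)) borel g" for k
  proof -
    have pm: "(\<lambda>\<omega>. (LR (Suc k) \<omega>, LS (Suc k) \<omega>)) \<in> measurable M (count_space UNIV \<Otimes>\<^sub>M count_space UNIV)"
      by measurable
    have "distr M borel (Y k) = distr M borel (g \<circ> (\<lambda>\<omega>. (LR (Suc k) \<omega>, LS (Suc k) \<omega>)))"
      by (simp add: g_def Y_def[abs_def] comp_def)
    also have "\<dots> = distr (distr M (count_space UNIV \<Otimes>\<^sub>M count_space UNIV) (\<lambda>\<omega>. (LR (Suc k) \<omega>, LS (Suc k) \<omega>))) borel g"
      by (rule distr_distr[OF gm pm, symmetric])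
    also have "distr M (count_space UNIV \<Otimes>\<^sub>M count_space UNIV) (\<lambda>\<omega>. (LR (Suc k) \<omega>, LS (Suc k) \<omega>))
        = distr M (count_space UNIV) (LR (Suc k)) \<Otimes>\<^sub>M distr M (count_space UNIV) (LS (Suc k))"
      using indep_pair[of "Suc k"] by (simp add: indep_var_distribution_eq)
    also have "\<dots> = distr M (count_space UNIV) (LR 1) \<Otimes>\<^sub>M distr M (count_space UNIV) (LS 1)"
      using distr_LR[of "Suc k"] distr_LS[of "Suc k"] by simp
    finally show ?thesis .
  qed
  show ?thesis using D[of i] D[of 0] by simp
qed

lemma E_Y: "expectation (Y i) = 0"
proof -
  have "expectation (Y i) = expectation (\<lambda>\<omega>. s (LR (Suc i) \<omega>)) - expectation (\<lambda>\<omega>. r (LS (Suc i) \<omega>))"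
    unfolding Y_def
    by (intro Bochner_Integration.integral_diff intb[where B = 1]) (auto simp: r01 s01 abs_le_iff)
  then show ?thesis using E_R[of "Suc i"] E_S[of "Suc i"] by simp
qed

lemma var_Y: "variance (Y i) = (\<integral>x. x\<^sup>2 \<partial>distr M borel (Y i))"
  using E_Y[of i] by (simp add: integral_distr)

lemma var_Y_eq: "variance (Y i) = variance (Y 0)"
  using var_Y[of i] var_Y[of 0] distr_Y[of i] by simp

lemma Y_sq_int: "integrable M (\<lambda>x. (Y i x)\<^sup>2)"
proof (rule intb[where B = 1])
  show "(\<lambda>x. (Y i x)\<^sup>2) \<in> borel_measurable M" by measurable
  fix \<omega> show "\<bar>(Y i \<omega>)\<^sup>2\<bar> \<le> 1" using Y_bound[of i \<omega>] by (simp add: abs_square_le_1)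
qed

lemma var_Y_pos: "variance (Y 0) > 0"
proof -
  define A where "A = (\<lambda>\<omega>. s (LR 1 \<omega>) - mu)"
  define B where "B = (\<lambda>\<omega>. r (LS 1 \<omega>) - mu)"
  have Am[measurable]: "A \<in> borel_measurable M" unfolding A_def using LR_meas'[of 0] by measurable
  have Bm[measurable]: "B \<in> borel_measurable M" unfolding B_def using LS_meas'[of 0] by measurable
  have Ab: "\<bar>A \<omega>\<bar> \<le> 1" for \<omega> using s01[of "LR 1 \<omega>"] mu_pos' mu_le1 unfolding A_def by (simp add: abs_le_iff)
  have Bb: "\<bar>B \<omega>\<bar> \<le> 1" for \<omega> using r01[of "LS 1 \<omega>"] mu_pos' mu_le1 unfolding B_def by (simp add: abs_le_iff)
  have Ai: "integrable M A" by (rule intb[OF Am Ab])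
  have Bi: "integrable M B" by (rule intb[OF Bm Bb])
  have A2i: "integrable M (\<lambda>\<omega>. (A \<omega>)\<^sup>2)"
    by (rule intb[where B = 1]) (auto simp: abs_square_le_1 Ab)
  have B2i: "integrable M (\<lambda>\<omega>. (B \<omega>)\<^sup>2)"
    by (rule intb[where B = 1]) (auto simp: abs_square_le_1 Bb)
  have ABi: "integrable M (\<lambda>\<omega>. A \<omega> * B \<omega>)"
    by (rule intb[where B = 1]) (auto simp: abs_mult intro!: mult_le_one Ab Bb)
  have i1: "integrable M (\<lambda>\<omega>. s (LR 1 \<omega>))"
    by (rule intb[where B = 1]) (auto simp: s01 abs_le_iff)
  have i2: "integrable M (\<lambda>\<omega>. r (LS 1 \<omega>))"
    by (rule intb[where B = 1]) (auto simp: r01 abs_le_iff)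
  have EA: "expectation A = 0"
  proof -
    have "expectation A = expectation (\<lambda>\<omega>. s (LR 1 \<omega>)) - expectation (\<lambda>\<omega>. mu)"
      unfolding A_def by (rule Bochner_Integration.integral_diff[OF i1]) simp
    then show ?thesis using E_R[of 1] by (simp add: prob_space)
  qed
  have EB: "expectation B = 0"
  proof -
    have "expectation B = expectation (\<lambda>\<omega>. r (LS 1 \<omega>)) - expectation (\<lambda>\<omega>. mu)"
      unfolding B_def by (rule Bochner_Integration.integral_diff[OF i2]) simp
    then show ?thesis using E_S[of 1] by (simp add: prob_space)
  qed
  have ind: "indep_var borel A borel B"
  proof -
    have "indep_var borel ((\<lambda>a. s a - mu) \<circ> LR 1) borel ((\<lambda>b. r b - mu) \<circ> LS 1)"
      by (rule indep_var_compose[OF indep_pair]) auto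
    then show ?thesis by (simp add: A_def B_def comp_def)
  qed
  have EAB: "expectation (\<lambda>\<omega>. A \<omega> * B \<omega>) = 0"
    using indep_var_lebesgue_integral[OF ind Ai Bi] EA EB by simp
  have vA: "variance (\<lambda>\<omega>. s (LR 1 \<omega>)) = expectation (\<lambda>\<omega>. (A \<omega>)\<^sup>2)"
    using E_R[of 1] by (simp add: A_def)
  have vB: "variance (\<lambda>\<omega>. r (LS 1 \<omega>)) = expectation (\<lambda>\<omega>. (B \<omega>)\<^sup>2)"
    using E_S[of 1] by (simp add: B_def)
  have "variance (Y 0) = expectation (\<lambda>\<omega>. (A \<omega>)\<^sup>2 + (B \<omega>)\<^sup>2 - 2 * (A \<omega> * B \<omega>))"
    using E_Y[of 0] by (intro Bochner_Integration.integral_cong) (auto simp: Y_def A_def B_def power2_eq_square algebra_simps)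
  also have "\<dots> = expectation (\<lambda>\<omega>. (A \<omega>)\<^sup>2) + expectation (\<lambda>\<omega>. (B \<omega>)\<^sup>2) - 2 * expectation (\<lambda>\<omega>. A \<omega> * B \<omega>)"
    using A2i B2i ABi by simp
  also have "\<dots> = variance (\<lambda>\<omega>. s (LR 1 \<omega>)) + variance (\<lambda>\<omega>. r (LS 1 \<omega>))"
    using EAB vA vB by simp
  finally have vv: "variance (Y 0) = variance (\<lambda>\<omega>. s (LR 1 \<omega>)) + variance (\<lambda>\<omega>. r (LS 1 \<omega>))" .
  have n1: "variance (\<lambda>\<omega>. s (LR 1 \<omega>)) \<ge> 0" by (rule integral_nonneg_AE) auto
  have n2: "variance (\<lambda>\<omega>. r (LS 1 \<omega>)) \<ge> 0" by (rule integral_nonneg_AE) auto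
  show ?thesis
  proof (rule ccontr)
    assume "\<not> 0 < variance (Y 0)"
    then have "variance (\<lambda>\<omega>. s (LR 1 \<omega>)) = 0" "variance (\<lambda>\<omega>. r (LS 1 \<omega>)) = 0"
      using vv n1 n2 by linarith+
    then show False using sigma_pos by simp
  qed
qed

end


lemma std_normal_point: "measure std_normal_distribution {x} = 0"
proof -
  have "emeasure std_normal_distribution {x} = 0"
    by (subst emeasure_density) (auto intro!: nn_integral_null_set)
  then show ?thesis by (simp add: measure_def)
qed

lemma std_normal_cont: "isCont (cdf std_normal_distribution) x"
proof -
  interpret N: real_distribution std_normal_distribution by (rule real_dist_normal_dist)
  show ?thesis using N.isCont_cdf std_normal_point by simp
qed

context sysm
begin

lemma anti_conc:
  assumes eta: "\<eta> > 0"
  shows "\<exists>\<delta>>0. \<exists>Q. \<forall>q\<ge>Q. prob {\<omega> \<in> space M. \<bar>Gam s LR q \<omega> - Gam r LS q \<omega>\<bar> \<le> \<delta> * sqrt q} \<le> \<eta>"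
proof -
  define \<sigma> where "\<sigma> = sqrt (variance (Y 0))"
  have sig: "\<sigma> > 0" using var_Y_pos unfolding \<sigma>_def by simp
  have sig2: "\<sigma>\<^sup>2 = variance (Y 0)" using var_Y_pos unfolding \<sigma>_def by simp
  define Zq where "Zq = (\<lambda>n x. (\<Sum>i<n. Y i x) / sqrt (real n * \<sigma>\<^sup>2))"
  define F where "F = (\<lambda>n. cdf (distr M borel (Zq n)))"
  define \<Phi> where "\<Phi> = cdf std_normal_distribution"
  have clt: "weak_conv_m (\<lambda>n. distr M borel (Zq n)) std_normal_distribution"
    unfolding Zq_def
  proof (rule central_limit_theorem_zero_mean[where \<mu> = "distr M borel (Y 0)"])
    show "indep_vars (\<lambda>i. borel) Y UNIV" by (rule indep_Y)
    show "expectation (Y n) = 0" for n by (rule E_Y)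
    show "\<sigma> > 0" by (rule sig)
    show "integrable M (\<lambda>x. (Y n x)\<^sup>2)" for n by (rule Y_sq_int)
    show "variance (Y n) = \<sigma>\<^sup>2" for n using var_Y_eq sig2 by simp
    show "distr M borel (Y n) = distr M borel (Y 0)" for n by (rule distr_Y)
  qed
  have conv: "(\<lambda>n. F n x) \<longlonglongrightarrow> \<Phi> x" for x
    using clt std_normal_cont[of x] unfolding weak_conv_m_def weak_conv_def F_def \<Phi>_def by blast
  have "\<Phi> \<midarrow>0\<rightarrow> \<Phi> 0" using std_normal_cont[of 0] unfolding \<Phi>_def isCont_def .
  from LIM_D[OF this, of "\<eta>/4"] eta obtain d where d: "d > 0"
    and dd: "\<And>x. x \<noteq> 0 \<Longrightarrow> norm (x - 0) < d \<Longrightarrow> norm (\<Phi> x - \<Phi> 0) < \<eta>/4" by auto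
  define \<delta>0 where "\<delta>0 = d / 3"
  have d0: "\<delta>0 > 0" using d by (simp add: \<delta>0_def)
  have p1: "\<bar>\<Phi> \<delta>0 - \<Phi> 0\<bar> < \<eta>/4" using dd[of \<delta>0] d0 d by (simp add: \<delta>0_def)
  have p2: "\<bar>\<Phi> (-2*\<delta>0) - \<Phi> 0\<bar> < \<eta>/4" using dd[of "-2*\<delta>0"] d0 d by (simp add: \<delta>0_def)
  have lim: "(\<lambda>n. F n \<delta>0 - F n (-2*\<delta>0)) \<longlonglongrightarrow> \<Phi> \<delta>0 - \<Phi> (-2*\<delta>0)"
    by (intro tendsto_diff conv)
  have "\<Phi> \<delta>0 - \<Phi> (-2*\<delta>0) < \<eta>" using p1 p2 unfolding abs_less_iff by linarith
  from order_tendstoD(2)[OF lim this] obtain Q0 where Q0: "\<And>n. n \<ge> Q0 \<Longrightarrow> F n \<delta>0 - F n (-2*\<delta>0) < \<eta>"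
    by (auto simp: eventually_sequentially)
  have Zm[measurable]: "Zq n \<in> borel_measurable M" for n unfolding Zq_def by measurable
  have Fx: "F n x = prob {\<omega> \<in> space M. Zq n \<omega> \<le> x}" for n x
  proof -
    have "F n x = measure (distr M borel (Zq n)) {..x}" unfolding F_def cdf_def by simp
    also have "\<dots> = prob (Zq n -` {..x} \<inter> space M)" by (rule measure_distr) auto
    also have "Zq n -` {..x} \<inter> space M = {\<omega> \<in> space M. Zq n \<omega> \<le> x}" by auto
    finally show ?thesis .
  qed
  show ?thesis
  proof (intro exI[of _ "\<delta>0 * \<sigma>"] conjI exI[of _ "Q0 + 1"] allI impI)
    show "\<delta>0 * \<sigma> > 0" using d0 sig by simp
    fix q :: nat assume q: "q \<ge> Q0 + 1"
    have sq: "sqrt (real q * \<sigma>\<^sup>2) = \<sigma> * sqrt q" using sig by (simp add: real_sqrt_mult mult.commute)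
    have sqp: "\<sigma> * sqrt q > 0" using sig q by simp
    have sub: "{\<omega> \<in> space M. \<bar>Gam s LR q \<omega> - Gam r LS q \<omega>\<bar> \<le> \<delta>0 * \<sigma> * sqrt q}
        \<subseteq> {\<omega> \<in> space M. Zq q \<omega> \<le> \<delta>0} - {\<omega> \<in> space M. Zq q \<omega> \<le> -2*\<delta>0}"
    proof
      fix \<omega> assume "\<omega> \<in> {\<omega> \<in> space M. \<bar>Gam s LR q \<omega> - Gam r LS q \<omega>\<bar> \<le> \<delta>0 * \<sigma> * sqrt q}"
      then have om: "\<omega> \<in> space M" and b: "\<bar>(\<Sum>i<q. Y i \<omega>)\<bar> \<le> \<delta>0 * (\<sigma> * sqrt q)"
        by (auto simp: Y_sum mult.assoc)
      have "\<bar>Zq q \<omega>\<bar> = \<bar>(\<Sum>i<q. Y i \<omega>)\<bar> / (\<sigma> * sqrt q)"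
        unfolding Zq_def sq using sqp by (simp add: abs_div)
      also have "\<dots> \<le> \<delta>0" using b sqp by (simp add: divide_le_eq)
      finally have "\<bar>Zq q \<omega>\<bar> \<le> \<delta>0" .
      then show "\<omega> \<in> {\<omega> \<in> space M. Zq q \<omega> \<le> \<delta>0} - {\<omega> \<in> space M. Zq q \<omega> \<le> -2*\<delta>0}"
        using om d0 by (auto simp: abs_le_iff)
    qed
    have "prob {\<omega> \<in> space M. \<bar>Gam s LR q \<omega> - Gam r LS q \<omega>\<bar> \<le> \<delta>0 * \<sigma> * sqrt q}
        \<le> prob ({\<omega> \<in> space M. Zq q \<omega> \<le> \<delta>0} - {\<omega> \<in> space M. Zq q \<omega> \<le> -2*\<delta>0})"
      using sub by (intro finite_measure_mono) auto
    also have "\<dots> = prob {\<omega> \<in> space M. Zq q \<omega> \<le> \<delta>0} - prob {\<omega> \<in> space M. Zq q \<omega> \<le> -2*\<delta>0}"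
      using d0 by (intro finite_measure_Diff) auto
    also have "\<dots> = F q \<delta>0 - F q (-2*\<delta>0)" using Fx by simp
    also have "\<dots> < \<eta>" using Q0 q by simp
    finally show "prob {\<omega> \<in> space M. \<bar>Gam s LR q \<omega> - Gam r LS q \<omega>\<bar> \<le> \<delta>0 * \<sigma> * sqrt q} \<le> \<eta>" by simp
  qed
qed

end


lemma asym1: "\<delta> > 0 \<Longrightarrow> (K::real) > 0 \<Longrightarrow> filterlim (\<lambda>n::nat. \<delta> * sqrt((real n - K*(real n powr (1/3)+1) - 1)/2) - K*(real n powr (1/3)+1) - 5) at_top sequentially"
  by real_asymp
lemma asym2: "(K::real) > 0 \<Longrightarrow> filterlim (\<lambda>n::nat. (real n - K*(real n powr (1/3)+1) - 1)/2) at_top sequentially"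
  by real_asymp
lemma asym3: "c > (0::real) \<Longrightarrow> ((\<lambda>n::nat. 4*(real n+1)^2 * exp(-c * real n powr (1/3))) \<longlongrightarrow> 0) sequentially"
  by real_asymp

lemma (in prob_space) prob_le_sub: "A \<subseteq> B \<Longrightarrow> B \<in> sets M \<Longrightarrow> prob A \<le> prob B"
  by (cases "A \<in> sets M") (auto intro: finite_measure_mono simp: measure_notin_sets)

context sysm
begin

lemma GamR_meas[measurable]: "(\<lambda>\<omega>. Gam s LR m \<omega>) \<in> borel_measurable M"
  using LR_meas by (rule Gam_meas)
lemma GamS_meas[measurable]: "(\<lambda>\<omega>. Gam r LS m \<omega>) \<in> borel_measurable M"
  using LS_meas by (rule Gam_meas)

lemma main:
  fixes C :: "nat \<Rightarrow> 'a \<Rightarrow> bool" and c :: real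
  assumes greedy: "\<And>n \<omega>. n \<ge> 1 \<Longrightarrow> \<omega> \<in> space M \<Longrightarrow>
        (Gam r LS (Scnt C n \<omega>) \<omega> > Gam s LR (Rcnt C n \<omega>) \<omega> \<longrightarrow> C (Suc n) \<omega>) \<and>
        (Gam r LS (Scnt C n \<omega>) \<omega> < Gam s LR (Rcnt C n \<omega>) \<omega> \<longrightarrow> \<not> C (Suc n) \<omega>)"
  shows "\<forall>\<epsilon>>0. (\<lambda>n. measure M {\<omega> \<in> space M.
            \<bar>(if stopT C n \<omega> = n then c
              else (real (Rcnt C n \<omega>) - real (Rcnt C (stopT C n \<omega>) \<omega>))
                   / (real n - real (stopT C n \<omega>))) - 1/2\<bar> > \<epsilon>}) \<longlonglongrightarrow> 0"
proof (intro allI impI)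
  fix \<epsilon>0 :: real assume e0: "\<epsilon>0 > 0"
  define \<epsilon> where "\<epsilon> = mu * \<epsilon>0"
  have eps: "\<epsilon> > 0" using e0 mu_pos' by (simp add: \<epsilon>_def)
  define K :: nat where "K = nat \<lceil>4 / (mu * \<epsilon>0)\<rceil> + 1"
  have K4: "real K > 4 / (mu * \<epsilon>0)" unfolding K_def by linarith
  have Kpos: "real K > 0" unfolding K_def by simp
  have muK: "mu * \<epsilon>0 * real K > 4" using K4 mu_pos' e0 by (simp add: divide_less_eq mult.commute)
  define L :: "nat \<Rightarrow> nat" where "L n = nat \<lfloor>real n powr (1/3)\<rfloor> + 1" for n
  have L1: "L n \<ge> 1" for n unfolding L_def by simp
  have Lge: "real (L n) \<ge> real n powr (1/3)" for n
  proof -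
    have "real n powr (1/3) \<ge> 0" by simp
    then show ?thesis unfolding L_def by linarith
  qed
  have Lle: "real (L n) \<le> real n powr (1/3) + 1" for n
  proof -
    have "real n powr (1/3) \<ge> 0" by simp
    then show ?thesis unfolding L_def by linarith
  qed
  define Bad where "Bad n = {\<omega> \<in> space M.
            \<bar>(if stopT C n \<omega> = n then c
              else (real (Rcnt C n \<omega>) - real (Rcnt C (stopT C n \<omega>) \<omega>))
                   / (real n - real (stopT C n \<omega>))) - 1/2\<bar> > \<epsilon>0}" for n
  define E1 where "E1 n = {\<omega> \<in> space M. \<exists>a\<le>n. \<exists>l. L n \<le> l \<and> l \<le> n \<and>
             \<bar>Gam s LR (a+l) \<omega> - Gam s LR a \<omega> - mu * l\<bar> \<ge> \<epsilon> * l}" for n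
  define E2 where "E2 n = {\<omega> \<in> space M. \<exists>a\<le>n. \<exists>l. L n \<le> l \<and> l \<le> n \<and>
             \<bar>Gam r LS (a+l) \<omega> - Gam r LS a \<omega> - mu * l\<bar> \<ge> \<epsilon> * l}" for n
  have E1m: "E1 n \<in> sets M" for n unfolding E1_def by measurable
  have E2m: "E2 n \<in> sets M" for n unfolding E2_def by measurable
  have pE1: "prob (E1 n) \<le> (real n + 1)\<^sup>2 * (2 * exp (-2 * \<epsilon>\<^sup>2 * L n))" for n
    unfolding E1_def using eps L1
    by (intro bad_windows[OF LR_meas indep_R E_R]) (auto simp: s01)
  have pE2: "prob (E2 n) \<le> (real n + 1)\<^sup>2 * (2 * exp (-2 * \<epsilon>\<^sup>2 * L n))" for n
    unfolding E2_def using eps L1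
    by (intro bad_windows[OF LS_meas indep_S E_S]) (auto simp: r01)
  have hoeff: "(real n + 1)\<^sup>2 * (2 * exp (-2 * \<epsilon>\<^sup>2 * L n))
       \<le> 4*(real n+1)^2 * exp(-(2 * \<epsilon>\<^sup>2) * real n powr (1/3))" for n
  proof -
    have e1: "exp (-2 * \<epsilon>\<^sup>2 * L n) \<le> exp(-(2 * \<epsilon>\<^sup>2) * real n powr (1/3))"
      using Lge[of n] eps by (simp add: mult_left_mono)
    have "(real n + 1)\<^sup>2 * (2 * exp (-2 * \<epsilon>\<^sup>2 * L n))
        \<le> (real n + 1)\<^sup>2 * (4 * exp(-(2 * \<epsilon>\<^sup>2) * real n powr (1/3)))"
    proof (rule mult_left_mono)
      show "2 * exp (-2 * \<epsilon>\<^sup>2 * L n) \<le> 4 * exp(-(2 * \<epsilon>\<^sup>2) * real n powr (1/3))"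
        using e1 exp_gt_zero[of "-(2 * \<epsilon>\<^sup>2) * real n powr (1/3)"] by linarith
    qed simp
    then show ?thesis by (simp add: mult_ac)
  qed
  have D: "\<And>k \<omega>. \<omega> \<in> space M \<Longrightarrow> \<bar>Gam r LS (Scnt C k \<omega>) \<omega> - Gam s LR (Rcnt C k \<omega>) \<omega>\<bar> \<le> 1"
    by (rule D_bound[OF r01 s01]) (rule greedy)
  show "(\<lambda>n. prob (Bad n)) \<longlonglongrightarrow> 0"
    unfolding Bad_def[symmetric]
  proof (rule order_tendstoI)
    fix a :: real assume "a < 0"
    then show "eventually (\<lambda>n. a < prob (Bad n)) sequentially"
      by (intro always_eventually allI) (simp add: less_le_trans[OF _ measure_nonneg])
  next
    fix e :: real assume e: "e > 0"
    define \<eta> where "\<eta> = e / 4"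
    have eta: "\<eta> > 0" using e by (simp add: \<eta>_def)
    obtain \<delta> Q where dl: "\<delta> > 0"
      and Q: "\<And>q. q \<ge> Q \<Longrightarrow> prob {\<omega> \<in> space M. \<bar>Gam s LR q \<omega> - Gam r LS q \<omega>\<bar> \<le> \<delta> * sqrt q} \<le> \<eta>"
      using anti_conc[OF eta] by blast
    have ev1: "eventually (\<lambda>n. 4*(real n+1)^2 * exp(-(2 * \<epsilon>\<^sup>2) * real n powr (1/3)) < \<eta>) sequentially"
      using order_tendstoD(2)[OF asym3 eta] eps by simp
    have ev2: "eventually (\<lambda>n. \<delta> * sqrt((real n - K*(real n powr (1/3)+1) - 1)/2) - K*(real n powr (1/3)+1) - 5 \<ge> 0) sequentially"
      using asym1[OF dl Kpos] unfolding filterlim_at_top by blast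
    have ev3: "eventually (\<lambda>n. (real n - K*(real n powr (1/3)+1) - 1)/2 \<ge> real Q + 1) sequentially"
      using asym2[OF Kpos] unfolding filterlim_at_top by blast
    show "eventually (\<lambda>n. prob (Bad n) < e) sequentially"
      using ev1 ev2 ev3
    proof eventually_elim
      case (elim n)
      define X where "X = (real n - K*(real n powr (1/3)+1) - 1)/2"
      have KL: "real (K * L n) \<le> K * (real n powr (1/3) + 1)"
        using Lle[of n] Kpos by (simp add: mult_left_mono)
      have X1: "X \<ge> real Q + 1" using elim(3) unfolding X_def .
      have X2: "2 * X = real n - real K * (real n powr (1/3) + 1) - 1" unfolding X_def by simp
      have "real (K * L n) < real n" using KL X1 X2 by linarith
      then have KLn: "K * L n < n" by (simp only: of_nat_less_iff)
      define k1 where "k1 = n - K * L n"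
      define q where "q = k1 div 2"
      have n1: "n \<ge> 1" using KLn by simp
      have k1n: "k1 \<le> n" unfolding k1_def by simp
      have nk1: "real n - real k1 = real (K * L n)" unfolding k1_def using KLn by (simp add: of_nat_diff)
      have qX: "real q \<ge> X"
      proof -
        have "k1 \<le> 2 * q + 1" unfolding q_def by simp
        then have "real k1 \<le> real (2 * q + 1)" by (simp only: of_nat_le_iff)
        then have "real k1 \<le> 2 * real q + 1" by simp
        then show ?thesis using X2 nk1 KL by linarith
      qed
      have qQ: "q \<ge> Q" using qX X1 by linarith
      have sqX: "sqrt X \<le> sqrt q" using qX by simp
      have E3b: "real n - real k1 + 5 \<le> \<delta> * sqrt q"
      proof -
        have "real n - real k1 + 5 \<le> \<delta> * sqrt X" using elim(2) nk1 KL unfolding X_def by linarith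
        also have "\<dots> \<le> \<delta> * sqrt q" using sqX dl by (simp add: mult_left_mono)
        finally show ?thesis .
      qed
      define E3 where "E3 = {\<omega> \<in> space M. \<bar>Gam s LR q \<omega> - Gam r LS q \<omega>\<bar> \<le> \<delta> * sqrt q}"
      have E3m: "E3 \<in> sets M" unfolding E3_def by measurable
      have sub: "Bad n \<subseteq> E1 n \<union> E2 n \<union> E3"
      proof
        fix \<omega> assume B: "\<omega> \<in> Bad n"
        then have om: "\<omega> \<in> space M" unfolding Bad_def by simp
        show "\<omega> \<in> E1 n \<union> E2 n \<union> E3"
        proof (rule ccontr)
          assume "\<omega> \<notin> E1 n \<union> E2 n \<union> E3"
          then have nE1: "\<omega> \<notin> E1 n" and nE2: "\<omega> \<notin> E2 n" and nE3: "\<omega> \<notin> E3" by auto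
          define T where "T = stopT C n \<omega>"
          show False
          proof (cases "T \<ge> k1")
            case True
            have "\<bar>Gam s LR q \<omega> - Gam r LS q \<omega>\<bar> \<le> real n - real k1 + 5"
              unfolding q_def using D[OF om] True n1 k1n unfolding T_def
              by (intro imbalance_bound[OF r01 s01]) auto
            then have "\<omega> \<in> E3" using E3b om unfolding E3_def by simp
            then show False using nE3 by simp
          next
            case False
            then have Tn: "T < n" using k1n by simp
            have gR: "\<forall>a\<le>n. \<forall>l. L n \<le> l \<and> l \<le> n \<longrightarrow> \<bar>Gam s LR (a+l) \<omega> - Gam s LR a \<omega> - mu * l\<bar> < \<epsilon> * l"
              using nE1 om unfolding E1_def by (auto simp: not_le; meson leD)
            have gS: "\<forall>a\<le>n. \<forall>l. L n \<le> l \<and> l \<le> n \<longrightarrow> \<bar>Gam r LS (a+l) \<omega> - Gam r LS a \<omega> - mu * l\<bar> < \<epsilon> * l"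
              using nE2 om unfolding E2_def by (auto simp: not_le; meson leD)
            define m where "m = real n - real T"
            have mKL: "m > real (K * L n)" using False nk1 unfolding m_def by linarith
            have rb: "\<bar>(real (Rcnt C n \<omega>) - real (Rcnt C T \<omega>)) / m - 1/2\<bar>
                 \<le> (2 + \<epsilon> * m + 2 * L n) / (2 * mu * m)"
              unfolding m_def using eps mu_pos' mu_le1
              by (intro ratio_bound[OF r01 s01 _ _ _ D[OF om] gR gS Tn]) auto
            have mpos: "m > 0" using mKL by (metis of_nat_0_le_iff le_less_trans)
            have key: "2 + 2 * real (L n) < mu * \<epsilon>0 * m"
            proof -
              have k1: "mu * \<epsilon>0 * real (K * L n) < mu * \<epsilon>0 * m"
                using mKL mu_pos' e0 by simp
              have k2: "mu * \<epsilon>0 * real (K * L n) = (mu * \<epsilon>0 * real K) * real (L n)" by simp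
              have k3: "4 * real (L n) \<le> (mu * \<epsilon>0 * real K) * real (L n)"
                using muK by (intro mult_right_mono) auto
              have "real (L n) \<ge> 1" using L1[of n] by simp
              then show ?thesis using k1 k2 k3 by linarith
            qed
            have "(2 + \<epsilon> * m + 2 * L n) / (2 * mu * m) < \<epsilon>0"
              using key mpos mu_pos' unfolding \<epsilon>_def by (simp add: divide_less_eq algebra_simps)
            with rb have "\<bar>(real (Rcnt C n \<omega>) - real (Rcnt C T \<omega>)) / m - 1/2\<bar> < \<epsilon>0" by linarith
            moreover have "T \<noteq> n" using Tn by simp
            ultimately show False using B unfolding Bad_def T_def m_def by auto
          qed
        qed
      qed
      have "prob (Bad n) \<le> prob (E1 n \<union> E2 n \<union> E3)"
        using sub E1m E2m E3m by (intro prob_le_sub) auto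
      also have "\<dots> \<le> prob (E1 n) + prob (E2 n) + prob E3"
        using E1m E2m E3m by (meson add_right_mono measure_Un_le order_trans sets.Un)
      also have "\<dots> \<le> \<eta> + \<eta> + \<eta>"
      proof -
        have "prob (E1 n) \<le> \<eta>" using pE1[of n] hoeff[of n] elim(1) by linarith
        moreover have "prob (E2 n) \<le> \<eta>" using pE2[of n] hoeff[of n] elim(1) by linarith
        moreover have "prob E3 \<le> \<eta>" unfolding E3_def using Q[OF qQ] .
        ultimately show ?thesis by linarith
      qed
      also have "\<dots> < e" using eta unfolding \<eta>_def by simp
      finally show ?case .
    qed
  qed
qed

end

theorem lemma4p2:
  fixes M :: "'a measure" and r s :: "nat \<Rightarrow> real"
    and LR LS :: "nat \<Rightarrow> 'a \<Rightarrow> nat" and F0 :: "'a set set"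
    and C :: "nat \<Rightarrow> 'a \<Rightarrow> bool" and c :: real
  assumes P: "prob_space M"
    and r_nonneg: "\<And>i. r i \<ge> 0" and r0: "r 0 = 0" and r_sum: "r sums 1"
    and s_nonneg: "\<And>i. s i \<ge> 0" and s0: "s 0 = 0" and s_sum: "s sums 1"
    and mu_pos: "(\<Sum>i. r i * s i) > 0"
    and LR_meas: "\<And>j. j \<ge> 1 \<Longrightarrow> LR j \<in> measurable M (count_space UNIV)"
    and LS_meas: "\<And>j. j \<ge> 1 \<Longrightarrow> LS j \<in> measurable M (count_space UNIV)"
    and LR_dist: "\<And>j i. j \<ge> 1 \<Longrightarrow> measure M {\<omega> \<in> space M. LR j \<omega> = i} = r i"
    and LS_dist: "\<And>j i. j \<ge> 1 \<Longrightarrow> measure M {\<omega> \<in> space M. LS j \<omega> = i} = s i"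
    and F0_alg: "sigma_algebra (space M) F0" and F0_sub: "F0 \<subseteq> sets M"
    and indep: "prob_space.indep_sets M
        (\<lambda>i. case i of None \<Rightarrow> F0
                     | Some (True, j) \<Rightarrow> rv_sets M (LR j)
                     | Some (False, j) \<Rightarrow> rv_sets M (LS j))
        ({None} \<union> Some ` (UNIV \<times> {1..}))"
    and sigma_pos: "sqrt (prob_space.variance M (\<lambda>\<omega>. s (LR 1 \<omega>)))
                    + sqrt (prob_space.variance M (\<lambda>\<omega>. r (LS 1 \<omega>))) > 0"
    and adapted: "\<And>n. {\<omega> \<in> space M. C (Suc n) \<omega>} \<in> filt M F0 LR LS C n"
    and greedy: "\<And>n \<omega>. n \<ge> 1 \<Longrightarrow> \<omega> \<in> space M \<Longrightarrow>
        (Gam r LS (Scnt C n \<omega>) \<omega> > Gam s LR (Rcnt C n \<omega>) \<omega> \<longrightarrow> C (Suc n) \<omega>) \<and>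
        (Gam r LS (Scnt C n \<omega>) \<omega> < Gam s LR (Rcnt C n \<omega>) \<omega> \<longrightarrow> \<not> C (Suc n) \<omega>)"
  shows "\<forall>\<epsilon>>0. (\<lambda>n. measure M {\<omega> \<in> space M.
            \<bar>(if stopT C n \<omega> = n then c
              else (real (Rcnt C n \<omega>) - real (Rcnt C (stopT C n \<omega>) \<omega>))
                   / (real n - real (stopT C n \<omega>))) - 1/2\<bar> > \<epsilon>}) \<longlonglongrightarrow> 0"
proof -
  have S: "sysm M r s LR LS F0"
    using P r_nonneg r_sum s_nonneg s_sum mu_pos LR_meas LS_meas LR_dist LS_dist indep sigma_pos
    by (simp add: sysm_def sysm_axioms_def)
  show ?thesis using sysm.main[OF S greedy] .
qed

end
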